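(* Let $B$ be the open unit disk and $U=(u,v)\in C^1(\overline B;\mathbb R^2)$ be harmonic in $B$. If $\det DU>0$ on $\partial B$, then for every $\alpha\in[0,2\pi]$ the number $M_\alpha$ is finite, and $M_\alpha=M_0$ for every $\alpha\in[0,2\pi]$.
   Context: For $\alpha\in[0,2\pi]$, $u_\alpha=\cos(\alpha)u+\sin(\alpha)v$, and $M_\alpha$ denotes the sum of the multiplicities of the critical points of $u_\alpha$ in $B$ (a nonnegative integer or $+\infty$); the multiplicity of a critical point $z_0$ of a harmonic function $w$ is the order of vanishing at $z_0$ of the holomorphic function $\partial_x w-i\partial_y w$. *)

theory Defs
  imports "HOL-Analysis.Analysis" "HOL-Library.Extended_Nat"
begin

text \<open>We identify \<open>\<real>\<^sup>2\<close> with \<open>\<complex>\<close> via \<open>(x,y) \<mapsto> x + i y\<close>.\<close>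

definition has_partials :: "(complex \<Rightarrow> real) \<Rightarrow> (complex \<Rightarrow> real) \<Rightarrow> (complex \<Rightarrow> real) \<Rightarrow> complex \<Rightarrow> bool" where
  "has_partials f fx fy z \<longleftrightarrow> (f has_derivative (\<lambda>h. fx z * Re h + fy z * Im h)) (at z)"

definition harmonic_on :: "(complex \<Rightarrow> real) \<Rightarrow> complex set \<Rightarrow> bool" where
  "harmonic_on f S \<longleftrightarrow> open S \<and>
     (\<exists>fx fy fxx fxy fyx fyy.
        (\<forall>z\<in>S. has_partials f fx fy z \<and> has_partials fx fxx fxy z \<and> has_partials fy fyx fyy z
                \<and> fxx z + fyy z = 0) \<and>
        continuous_on S fxx \<and> continuous_on S fxy \<and> continuous_on S fyx \<and> continuous_on S fyy)"

definition cgrad :: "(complex \<Rightarrow> real) \<Rightarrow> complex \<Rightarrow> complex" where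
  "cgrad w z = complex_of_real (frechet_derivative w (at z) 1)
               - \<i> * complex_of_real (frechet_derivative w (at z) \<i>)"

definition vanishing_order :: "(complex \<Rightarrow> complex) \<Rightarrow> complex \<Rightarrow> enat" where
  "vanishing_order g z =
     (if \<exists>n. (deriv ^^ n) g z \<noteq> 0 then enat (LEAST n. (deriv ^^ n) g z \<noteq> 0) else \<infinity>)"

definition crit_mult_sum :: "(complex \<Rightarrow> real) \<Rightarrow> enat" where
  "crit_mult_sum w =
     (let C = {z \<in> ball 0 1. cgrad w z = 0}
      in if finite C then (\<Sum>z\<in>C. vanishing_order (cgrad w) z) else \<infinity>)"

end

theory Submission
  imports Defs "HOL-Complex_Analysis.Complex_Analysis"
begin

lemma hp_x:
  assumes "has_partials f fx fy (p + of_real t)"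
  shows "((\<lambda>s. f (p + of_real s)) has_real_derivative fx (p + of_real t)) (at t)"
proof -
  have 1: "((\<lambda>s::real. p + of_real s) has_derivative (\<lambda>h. of_real h)) (at t)"
    by (auto intro!: derivative_eq_intros)
  have "((\<lambda>s. f (p + of_real s)) has_derivative
        (\<lambda>h. fx (p + of_real t) * Re (of_real h) + fy (p + of_real t) * Im (of_real h))) (at t)"
    using has_derivative_compose[OF 1 assms[unfolded has_partials_def]] by (simp add: o_def)
  moreover have "(\<lambda>h::real. h * fx (p + of_real t)) = (*) (fx (p + of_real t))" by (auto simp: fun_eq_iff)
  ultimately show ?thesis
    by (simp add: has_field_derivative_def)
qed

lemma hp_y:
  assumes "has_partials f fx fy (p + \<i> * of_real t)"
  shows "((\<lambda>s. f (p + \<i> * of_real s)) has_real_derivative fy (p + \<i> * of_real t)) (at t)"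
proof -
  have 1: "((\<lambda>s::real. p + \<i> * of_real s) has_derivative (\<lambda>h. \<i> * of_real h)) (at t)"
    by (auto intro!: derivative_eq_intros)
  have "((\<lambda>s. f (p + \<i> * of_real s)) has_derivative
        (\<lambda>h. fx (p + \<i> * of_real t) * Re (\<i> * of_real h) + fy (p + \<i> * of_real t) * Im (\<i> * of_real h))) (at t)"
    using has_derivative_compose[OF 1 assms[unfolded has_partials_def]] by (simp add: o_def)
  moreover have "(\<lambda>h::real. h * fy (p + \<i> * of_real t)) = (*) (fy (p + \<i> * of_real t))" by (auto simp: fun_eq_iff)
  ultimately show ?thesis
    by (simp add: has_field_derivative_def)
qed

lemma mixed_sym:
  fixes u ux uy a b c d :: "complex \<Rightarrow> real"
  assumes S: "open S" "z0 \<in> S"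
    and pu: "\<And>z. z \<in> S \<Longrightarrow> has_partials u ux uy z"
    and pux: "\<And>z. z \<in> S \<Longrightarrow> has_partials ux a b z"
    and puy: "\<And>z. z \<in> S \<Longrightarrow> has_partials uy c d z"
    and cb: "isCont b z0" and cc: "isCont c z0"
  shows "b z0 = c z0"
proof (rule ccontr)
  assume ne: "b z0 \<noteq> c z0"
  define e where "e = \<bar>b z0 - c z0\<bar> / 2"
  have e: "e > 0" using ne by (simp add: e_def)
  obtain d1 where d1: "d1 > 0" "\<And>w. dist w z0 < d1 \<Longrightarrow> \<bar>b w - b z0\<bar> < e"
    using cb e unfolding continuous_at_eps_delta by (metis dist_real_def)
  obtain d2 where d2: "d2 > 0" "\<And>w. dist w z0 < d2 \<Longrightarrow> \<bar>c w - c z0\<bar> < e"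
    using cc e unfolding continuous_at_eps_delta by (metis dist_real_def)
  obtain d3 where d3: "d3 > 0" "ball z0 d3 \<subseteq> S" using S openE by blast
  define h where "h = min d1 (min d2 d3) / 3"
  have h: "h > 0" using d1 d2 d3 by (simp add: h_def)
  define q where "q t s = z0 + of_real t + \<i> * of_real s" for t s :: real
  have qd: "dist (q t s) z0 < min d1 (min d2 d3)" if "0 \<le> t" "t \<le> h" "0 \<le> s" "s \<le> h" for t s
  proof -
    have "dist (q t s) z0 = norm (of_real t + \<i> * of_real s)" by (simp add: q_def dist_norm)
    also have "\<dots> \<le> norm (of_real t :: complex) + norm (\<i> * of_real s)" by (rule norm_triangle_ineq)
    also have "\<dots> \<le> 2 * h" using that by (simp add: norm_mult)
    also have "\<dots> < min d1 (min d2 d3)" using d1(1) d2(1) d3(1) by (auto simp: h_def min_def)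
    finally show ?thesis .
  qed
  have qS: "q t s \<in> S" if "0 \<le> t" "t \<le> h" "0 \<le> s" "s \<le> h" for t s
    using qd[OF that] d3 by (auto simp: dist_commute)
  have q1: "q t s = (z0 + \<i> * of_real s) + of_real t" for t s by (simp add: q_def algebra_simps)
  have q2: "q t s = (z0 + of_real t) + \<i> * of_real s" for t s by (simp add: q_def algebra_simps)
  define D where "D = u (q h h) - u (q h 0) - u (q 0 h) + u (q 0 0)"
  have "\<exists>t1. 0 < t1 \<and> t1 < h \<and> (u (q h h) - u (q h 0)) - (u (q 0 h) - u (q 0 0))
           = (h - 0) * (ux (q t1 h) - ux (q t1 0))"
  proof (rule MVT2[where f = "\<lambda>t. u (q t h) - u (q t 0)"])
    fix t assume t: "0 \<le> t" "t \<le> h"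
    have A: "((\<lambda>t. u (q t h)) has_real_derivative ux (q t h)) (at t)"
      using hp_x[of u ux uy "z0 + \<i> * of_real h" t] pu[OF qS[OF t, of h]] h by (simp add: q1)
    have B: "((\<lambda>t. u (q t 0)) has_real_derivative ux (q t 0)) (at t)"
      using hp_x[of u ux uy "z0 + \<i> * of_real 0" t] pu[OF qS[OF t, of 0]] h by (simp add: q1)
    show "((\<lambda>t. u (q t h) - u (q t 0)) has_real_derivative ux (q t h) - ux (q t 0)) (at t)"
      by (rule DERIV_diff[OF A B])
  qed (use h in auto)
  then obtain t1 where t1: "0 < t1" "t1 < h" "D = h * (ux (q t1 h) - ux (q t1 0))"
    by (auto simp: D_def algebra_simps)
  have "\<exists>s1. 0 < s1 \<and> s1 < h \<and> ux (q t1 h) - ux (q t1 0) = (h - 0) * b (q t1 s1)"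
  proof (rule MVT2[where f = "\<lambda>s. ux (q t1 s)"])
    fix s assume s: "0 \<le> s" "s \<le> h"
    show "((\<lambda>s. ux (q t1 s)) has_real_derivative b (q t1 s)) (at s)"
      using hp_y[of ux a b "z0 + of_real t1" s] pux[OF qS[of t1 s]] s t1 by (simp add: q2)
  qed (use h in auto)
  then obtain s1 where s1: "0 < s1" "s1 < h" "D = h * h * b (q t1 s1)"
    using t1 by auto
  have "\<exists>s2. 0 < s2 \<and> s2 < h \<and> (u (q h h) - u (q 0 h)) - (u (q h 0) - u (q 0 0))
           = (h - 0) * (uy (q h s2) - uy (q 0 s2))"
  proof (rule MVT2[where f = "\<lambda>s. u (q h s) - u (q 0 s)"])
    fix s assume s: "0 \<le> s" "s \<le> h"
    have A: "((\<lambda>s. u (q h s)) has_real_derivative uy (q h s)) (at s)"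
      using hp_y[of u ux uy "z0 + of_real h" s] pu[OF qS[of h s]] h s by (simp add: q2)
    have B: "((\<lambda>s. u (q 0 s)) has_real_derivative uy (q 0 s)) (at s)"
      using hp_y[of u ux uy "z0 + of_real 0" s] pu[OF qS[of 0 s]] h s by (simp add: q2)
    show "((\<lambda>s. u (q h s) - u (q 0 s)) has_real_derivative uy (q h s) - uy (q 0 s)) (at s)"
      by (rule DERIV_diff[OF A B])
  qed (use h in auto)
  then obtain s2 where s2: "0 < s2" "s2 < h" "D = h * (uy (q h s2) - uy (q 0 s2))"
    by (auto simp: D_def algebra_simps)
  have "\<exists>t2. 0 < t2 \<and> t2 < h \<and> uy (q h s2) - uy (q 0 s2) = (h - 0) * c (q t2 s2)"
  proof (rule MVT2[where f = "\<lambda>t. uy (q t s2)"])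
    fix t assume t: "0 \<le> t" "t \<le> h"
    show "((\<lambda>t. uy (q t s2)) has_real_derivative c (q t s2)) (at t)"
      using hp_x[of uy c d "z0 + \<i> * of_real s2" t] puy[OF qS[of t s2]] s2 t by (simp add: q1)
  qed (use h in auto)
  then obtain t2 where t2: "0 < t2" "t2 < h" "D = h * h * c (q t2 s2)"
    using s2 by auto
  have eq: "b (q t1 s1) = c (q t2 s2)" using s1(3) t2(3) h by simp
  have "\<bar>b (q t1 s1) - b z0\<bar> < e" using d1(2) qd[of t1 s1] t1 s1 by auto
  moreover have "\<bar>c (q t2 s2) - c z0\<bar> < e" using d2(2) qd[of t2 s2] t2 s2 by auto
  ultimately show False using eq unfolding e_def
  proof -
    fix X Y Z W :: real
    have "\<bar>X - Z\<bar> < \<bar>Z - W\<bar> / 2 \<Longrightarrow> \<bar>Y - W\<bar> < \<bar>Z - W\<bar> / 2 \<Longrightarrow> X = Y \<Longrightarrow> False" for X Y Z W :: real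
      by (simp add: abs_if split: if_splits)
    then show ?thesis using \<open>\<bar>b (q t1 s1) - b z0\<bar> < e\<close> \<open>\<bar>c (q t2 s2) - c z0\<bar> < e\<close> eq unfolding e_def by blast
  qed
qed

lemma hp_unique:
  assumes "has_partials f a b z" "has_partials f c d z"
  shows "a z = c z \<and> b z = d z"
proof -
  have "(\<lambda>h. a z * Re h + b z * Im h) = (\<lambda>h. c z * Re h + d z * Im h)"
    using assms unfolding has_partials_def by (metis frechet_derivative_at)
  from fun_cong[OF this, of 1] fun_cong[OF this, of \<i>] show ?thesis by simp
qed

lemma cgrad_eq:
  assumes "has_partials w wx wy z"
  shows "cgrad w z = complex_of_real (wx z) - \<i> * complex_of_real (wy z)"
proof -
  have "frechet_derivative w (at z) = (\<lambda>h. wx z * Re h + wy z * Im h)"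
    using assms unfolding has_partials_def by (metis frechet_derivative_at)
  then show ?thesis by (simp add: cgrad_def)
qed

lemma holo_grad:
  assumes S: "open S" and pu: "\<And>z. z\<in>S \<Longrightarrow> has_partials u ux uy z" and h: "harmonic_on u S"
  shows "(\<lambda>z. complex_of_real (ux z) - \<i> * complex_of_real (uy z)) holomorphic_on S"
proof -
  obtain fx fy fxx fxy fyx fyy where
    P: "\<And>z. z\<in>S \<Longrightarrow> has_partials u fx fy z \<and> has_partials fx fxx fxy z \<and> has_partials fy fyx fyy z
                \<and> fxx z + fyy z = 0"
    and C: "continuous_on S fxy" "continuous_on S fyx"
    using h unfolding harmonic_on_def by blast
  have eqx: "fx z = ux z" and eqy: "fy z = uy z" if "z \<in> S" for z
    using hp_unique[OF conjunct1[OF P[OF that]] pu[OF that]] by auto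
  have pux: "has_partials ux fxx fxy z" if "z \<in> S" for z
    unfolding has_partials_def
    by (rule has_derivative_transform_within_open[OF _ S that, where f=fx])
       (use P[OF that] eqx in \<open>auto simp: has_partials_def\<close>)
  have puy: "has_partials uy fyx fyy z" if "z \<in> S" for z
    unfolding has_partials_def
    by (rule has_derivative_transform_within_open[OF _ S that, where f=fy])
       (use P[OF that] eqy in \<open>auto simp: has_partials_def\<close>)
  have sym: "fxy z = fyx z" if "z \<in> S" for z
    by (rule mixed_sym[OF S that pu pux puy])
       (use C S that in \<open>auto simp: continuous_on_eq_continuous_at\<close>)
  show ?thesis
    unfolding holomorphic_on_open[OF S]
  proof
    fix z assume z: "z \<in> S"
    have dx: "((\<lambda>z. complex_of_real (ux z)) has_derivative (\<lambda>h. complex_of_real (fxx z * Re h + fxy z * Im h))) (at z)"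
      using bounded_linear.has_derivative[OF bounded_linear_of_real pux[OF z, unfolded has_partials_def]] .
    have dy: "((\<lambda>z. complex_of_real (uy z)) has_derivative (\<lambda>h. complex_of_real (fyx z * Re h + fyy z * Im h))) (at z)"
      using bounded_linear.has_derivative[OF bounded_linear_of_real puy[OF z, unfolded has_partials_def]] .
    have d: "((\<lambda>z. complex_of_real (ux z) - \<i> * complex_of_real (uy z)) has_derivative
       (\<lambda>h. complex_of_real (fxx z * Re h + fxy z * Im h) - \<i> * complex_of_real (fyx z * Re h + fyy z * Im h))) (at z)"
      using has_derivative_diff[OF dx has_derivative_mult_right[OF dy, of \<i>]] by simp
    have "(\<lambda>h. complex_of_real (fxx z * Re h + fxy z * Im h) - \<i> * complex_of_real (fyx z * Re h + fyy z * Im h))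
          = (*) (complex_of_real (fxx z) - \<i> * complex_of_real (fyx z))"
    proof
      fix h
      have "fyy z = - fxx z" using P[OF z] by simp
      then show "complex_of_real (fxx z * Re h + fxy z * Im h) - \<i> * complex_of_real (fyx z * Re h + fyy z * Im h)
          = (complex_of_real (fxx z) - \<i> * complex_of_real (fyx z)) * h"
        using sym[OF z] by (simp add: complex_eq_iff algebra_simps)
    qed
    with d show "\<exists>f'. ((\<lambda>z. complex_of_real (ux z) - \<i> * complex_of_real (uy z)) has_field_derivative f') (at z)"
      unfolding has_field_derivative_def by auto
  qed
qed

lemma count_nonzero_deriv:
  assumes holo: "f holomorphic_on ball 0 1" and z: "z \<in> ball 0 1"
    and w: "w \<in> ball 0 1" "f w \<noteq> 0"
  shows "\<exists>n. (deriv ^^ n) f z \<noteq> 0"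
proof (rule ccontr)
  assume "\<not> ?thesis"
  then have "f w = 0"
    using holomorphic_fun_eq_0_on_connected[OF holo open_ball convex_connected[OF convex_ball] _ z w(1)]
    by blast
  with w show False by simp
qed

lemma count_zorder:
  assumes holo: "f holomorphic_on ball 0 1" and z: "z \<in> ball 0 1"
    and ex: "\<exists>n. (deriv ^^ n) f z \<noteq> 0"
  shows "zorder f z = int (LEAST n. (deriv ^^ n) f z \<noteq> 0)"
proof (rule zorder_zero_eqI[OF holo open_ball z])
  show "\<And>i. i < nat (int (LEAST n. (deriv ^^ n) f z \<noteq> 0)) \<Longrightarrow> (deriv ^^ i) f z = 0"
    using not_less_Least by auto
  show "(deriv ^^ nat (int (LEAST n. (deriv ^^ n) f z \<noteq> 0))) f z \<noteq> 0"
    using LeastI_ex[OF ex] by simp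
qed auto

lemma count_finite:
  assumes holo: "f holomorphic_on ball 0 1" and r: "0 \<le> r0" "r0 < 1"
    and nz: "\<And>z. z \<in> ball 0 1 \<Longrightarrow> r0 < norm z \<Longrightarrow> f z \<noteq> 0"
  shows "finite {z\<in>ball 0 1. f z = 0}"
proof -
  have sub: "{z\<in>ball 0 1. f z = 0} \<subseteq> {z\<in>cball 0 r0. f z = 0}"
    using nz by (force simp: not_less)
  define w where "w = complex_of_real ((1 + r0) / 2)"
  have nw: "norm w = (1 + r0) / 2" unfolding w_def norm_of_real using r by simp
  have w: "w \<in> ball 0 1" "r0 < norm w" using r nw by auto
  show ?thesis
  proof (cases "f constant_on ball 0 1")
    case True
    then obtain c where c: "\<And>z. z \<in> ball 0 1 \<Longrightarrow> f z = c" by (auto simp: constant_on_def)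
    have "c \<noteq> 0" using nz[OF w] c[OF w(1)] by simp
    then have "{z\<in>ball 0 1. f z = 0} = {}" using c by auto
    then show ?thesis by (simp only: finite.emptyI)
  next
    case False
    have "finite {z\<in>cball 0 r0. f z = 0}"
      by (rule holomorphic_compact_finite_zeros[OF holo open_ball convex_connected[OF convex_ball] compact_cball _ False])
         (use r in auto)
    then show ?thesis using finite_subset[OF sub] by blast
  qed
qed

lemma count_integral:
  assumes holo: "f holomorphic_on ball 0 1" and r: "0 \<le> r0" "r0 < r" "r < 1"
    and nz: "\<And>z. z \<in> ball 0 1 \<Longrightarrow> r0 < norm z \<Longrightarrow> f z \<noteq> 0"
  shows "contour_integral (circlepath 0 r) (\<lambda>x. deriv f x * 1 / f x) =
         2 * pi * \<i> * of_nat (\<Sum>z\<in>{z\<in>ball 0 1. f z = 0}. (LEAST n. (deriv ^^ n) f z \<noteq> 0))"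
proof -
  define Z where "Z = {z\<in>ball 0 1. f z = 0}"
  have fin: "finite Z" unfolding Z_def by (rule count_finite[OF holo _ _ nz]) (use r in auto)
  define w where "w = complex_of_real r"
  have w: "w \<in> ball 0 1" "f w \<noteq> 0" using r nz[of w] by (auto simp: w_def)
  have pz: "{w \<in> ball 0 1. f w = 0 \<or> w \<in> {}} = Z" by (auto simp: Z_def)
  have "contour_integral (circlepath 0 r) (\<lambda>x. deriv f x * 1 / f x) =
        2 * pi * \<i> * (\<Sum>p\<in>Z. winding_number (circlepath 0 r) p * 1 * zorder f p)"
    unfolding pz[symmetric]
  proof (rule argument_principle)
    show "connected (ball (0::complex) 1)" by (simp add: convex_connected)
    show "f holomorphic_on ball 0 1 - {}" using holo by simp
    show "path_image (circlepath 0 r) \<subseteq> ball 0 1 - {w \<in> ball 0 1. f w = 0 \<or> w \<in> {}}"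
      using r nz by (auto simp: abs_of_nonneg)
    show "\<forall>z. z \<notin> ball 0 1 \<longrightarrow> winding_number (circlepath 0 r) z = 0"
    proof (intro allI impI)
      fix z :: complex assume "z \<notin> ball 0 1"
      then show "winding_number (circlepath 0 r) z = 0"
        using r by (intro winding_number_zero_outside[of _ "cball 0 r"])
                   (auto simp: valid_path_imp_path abs_of_nonneg)
    qed
    show "finite {w \<in> ball 0 1. f w = 0 \<or> w \<in> {}}" using fin pz by simp
  qed (use r in auto)
  also have "(\<Sum>p\<in>Z. winding_number (circlepath 0 r) p * 1 * zorder f p) =
             (\<Sum>p\<in>Z. of_nat (LEAST n. (deriv ^^ n) f p \<noteq> 0))"
  proof (rule sum.cong)
    fix p assume p: "p \<in> Z"
    then have pb: "p \<in> ball 0 1" "f p = 0" by (auto simp: Z_def)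
    have "norm p \<le> r0" using nz[OF pb(1)] pb(2) by force
    then have "winding_number (circlepath 0 r) p = 1"
      using r by (intro winding_number_circlepath) auto
    moreover have "zorder f p = int (LEAST n. (deriv ^^ n) f p \<noteq> 0)"
      by (rule count_zorder[OF holo pb(1) count_nonzero_deriv[OF holo pb(1) w]])
    ultimately show "winding_number (circlepath 0 r) p * 1 * of_int (zorder f p) =
                     of_nat (LEAST n. (deriv ^^ n) f p \<noteq> 0)" by simp
  qed simp
  finally show ?thesis by (simp add: Z_def)
qed

lemma integral_eq:
  assumes ha: "fa holomorphic_on A" and hb: "fb holomorphic_on A" and A: "open A"
    and g: "valid_path g" "pathfinish g = pathstart g" "path_image g \<subseteq> A"
    and pos: "\<And>z. z \<in> A \<Longrightarrow> Re (c * fa z * cnj (fb z)) > 0"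
  shows "contour_integral g (\<lambda>x. deriv fa x * 1 / fa x) = contour_integral g (\<lambda>x. deriv fb x * 1 / fb x)"
proof -
  have nz: "fa z \<noteq> 0" "fb z \<noteq> 0" "c \<noteq> 0" if "z \<in> A" for z
    using pos[OF that] by auto
  have req: "Re (c * fa z / fb z) > 0" if z: "z \<in> A" for z
  proof -
    have "c * fa z / fb z = (c * fa z * cnj (fb z)) / complex_of_real ((cmod (fb z))\<^sup>2)"
    proof -
      have "c * fa z / fb z = (c * fa z * cnj (fb z)) / (fb z * cnj (fb z))"
        using nz[OF z] by (simp add: field_simps)
      also have "fb z * cnj (fb z) = complex_of_real ((cmod (fb z))\<^sup>2)"
        by (rule complex_norm_square[symmetric])
      finally show ?thesis .
    qed
    then show ?thesis using pos[OF z] nz[OF z] by (simp add: Re_divide_of_real)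
  qed
  define P where "P z = Ln (c * fa z / fb z)" for z
  have dP: "(P has_field_derivative (deriv fa z * 1 / fa z - deriv fb z * 1 / fb z)) (at z within A)"
    if z: "z \<in> A" for z
  proof -
    have da: "(fa has_field_derivative deriv fa z) (at z)" by (rule holomorphic_derivI[OF ha A z])
    have db: "(fb has_field_derivative deriv fb z) (at z)" by (rule holomorphic_derivI[OF hb A z])
    have dq: "((\<lambda>z. c * fa z / fb z) has_field_derivative
               (c * deriv fa z * fb z - c * fa z * deriv fb z) / (fb z * fb z)) (at z)"
      using DERIV_divide[OF DERIV_cmult[OF da, of c] db nz(2)[OF z]] by simp
    have nr: "c * fa z / fb z \<notin> \<real>\<^sub>\<le>\<^sub>0" using req[OF z] by (auto simp: complex_nonpos_Reals_iff)
    have "(P has_field_derivative inverse (c * fa z / fb z) *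
              ((c * deriv fa z * fb z - c * fa z * deriv fb z) / (fb z * fb z))) (at z)"
      unfolding P_def by (rule DERIV_chain2[OF has_field_derivative_Ln[OF nr] dq])
    moreover have "inverse (c * fa z / fb z) *
              ((c * deriv fa z * fb z - c * fa z * deriv fb z) / (fb z * fb z)) =
             deriv fa z * 1 / fa z - deriv fb z * 1 / fb z"
      using nz[OF z] by (simp add: field_simps)
    ultimately show ?thesis by (metis has_field_derivative_at_within)
  qed
  have i0: "((\<lambda>x. deriv fa x * 1 / fa x - deriv fb x * 1 / fb x) has_contour_integral 0) g"
    using contour_integral_primitive[OF dP g(1) g(3)] g(2) by simp
  have hb': "(\<lambda>x. deriv fb x * 1 / fb x) holomorphic_on A"
    using nz by (intro holomorphic_intros holomorphic_deriv hb A) auto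
  have ib: "((\<lambda>x. deriv fb x * 1 / fb x) has_contour_integral contour_integral g (\<lambda>x. deriv fb x * 1 / fb x)) g"
    by (rule has_contour_integral_integral[OF contour_integrable_holomorphic_simple[OF hb' A g(1) g(3)]])
  have "((\<lambda>x. (deriv fa x * 1 / fa x - deriv fb x * 1 / fb x) + deriv fb x * 1 / fb x) has_contour_integral
          0 + contour_integral g (\<lambda>x. deriv fb x * 1 / fb x)) g"
    by (rule has_contour_integral_add[OF i0 ib])
  then have "((\<lambda>x. deriv fa x * 1 / fa x) has_contour_integral contour_integral g (\<lambda>x. deriv fb x * 1 / fb x)) g"
    by simp
  then show ?thesis by (rule contour_integral_unique)
qed

lemma sum_enat_eq: "finite A \<Longrightarrow> (\<Sum>x\<in>A. enat (f x)) = enat (\<Sum>x\<in>A. f x)"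
  by (induct rule: finite_induct) (auto simp: zero_enat_def)

lemma pos_lemma:
  fixes ux uy vx vy co si :: real
  assumes d: "ux * vy - uy * vx > 0" and cs: "co\<^sup>2 + si\<^sup>2 = 1"
  shows "Re ((if si > 0 then \<i> else if si < 0 then -\<i> else complex_of_real co) *
             (complex_of_real co * (complex_of_real ux - \<i> * complex_of_real uy) +
              complex_of_real si * (complex_of_real vx - \<i> * complex_of_real vy)) *
             cnj (complex_of_real ux - \<i> * complex_of_real uy)) > 0"
proof -
  define X where "X = (complex_of_real co * (complex_of_real ux - \<i> * complex_of_real uy) +
              complex_of_real si * (complex_of_real vx - \<i> * complex_of_real vy)) *
             cnj (complex_of_real ux - \<i> * complex_of_real uy)"
  have ReX: "Re X = co * (ux\<^sup>2 + uy\<^sup>2) + si * (vx * ux + vy * uy)"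
    by (simp add: X_def algebra_simps power2_eq_square)
  have ImX: "Im X = - si * (ux * vy - uy * vx)"
    by (simp add: X_def algebra_simps)
  have "Re ((if si > 0 then \<i> else if si < 0 then -\<i> else complex_of_real co) * X) > 0"
  proof (cases "si > 0")
    case True then show ?thesis using ImX d by simp
  next
    case False
    show ?thesis
    proof (cases "si < 0")
      case True then show ?thesis using ImX d False by (simp add: mult_neg_pos)
    next
      case F2: False
      then have "si = 0" using False by simp
      then have "co\<^sup>2 = 1" using cs by simp
      moreover have "ux\<^sup>2 + uy\<^sup>2 > 0"
      proof (rule ccontr)
        assume "\<not> ux\<^sup>2 + uy\<^sup>2 > 0"
        then have "ux = 0" "uy = 0" by (smt (verit) zero_le_power2 zero_eq_power2)+
        then show False using d by simp
      qed
      ultimately show ?thesis using ReX \<open>si = 0\<close> False F2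
        by (simp add: power2_eq_square mult.assoc[symmetric])
    qed
  qed
  then show ?thesis by (simp add: X_def mult.assoc)
qed

theorem proposition3p2:
  fixes u v ux uy vx vy :: "complex \<Rightarrow> real"
  assumes "continuous_on (cball 0 1) u" and "continuous_on (cball 0 1) v"
    and "\<forall>z\<in>ball 0 1. has_partials u ux uy z"
    and "\<forall>z\<in>ball 0 1. has_partials v vx vy z"
    and "continuous_on (cball 0 1) ux" and "continuous_on (cball 0 1) uy"
    and "continuous_on (cball 0 1) vx" and "continuous_on (cball 0 1) vy"
    and "harmonic_on u (ball 0 1)" and "harmonic_on v (ball 0 1)"
    and "\<forall>z\<in>sphere 0 1. ux z * vy z - uy z * vx z > 0"
  shows "\<forall>\<alpha>\<in>{0..2*pi}.
           crit_mult_sum (\<lambda>z. cos \<alpha> * u z + sin \<alpha> * v z) \<noteq> \<infinity> \<and>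
           crit_mult_sum (\<lambda>z. cos \<alpha> * u z + sin \<alpha> * v z) =
           crit_mult_sum (\<lambda>z. cos 0 * u z + sin 0 * v z)"
proof -
  note pu = assms(3) and pv = assms(4)
  define d where "d z = ux z * vy z - uy z * vx z" for z
  have cd: "continuous_on (cball 0 1) d"
    unfolding d_def using assms(5-8) by (intro continuous_intros) auto
  define K where "K = cball 0 1 \<inter> d -` {..0}"
  have "closed K" unfolding K_def by (rule continuous_closed_preimage[OF cd closed_cball closed_atMost])
  then have cK: "compact K" unfolding K_def
    by (metis bounded_cball bounded_subset compact_eq_bounded_closed inf_le1)
  obtain r0 where r0: "0 \<le> r0" "r0 < 1" and r0d: "\<And>z. z \<in> cball 0 1 \<Longrightarrow> r0 < norm z \<Longrightarrow> d z > 0"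
  proof (cases "K = {}")
    case True
    then show ?thesis using that[of 0] by (force simp: K_def)
  next
    case False
    obtain k where k: "k \<in> K" "\<And>y. y \<in> K \<Longrightarrow> norm y \<le> norm k"
      using continuous_attains_sup[OF cK False continuous_on_norm_id] by blast
    have "norm k < 1"
    proof -
      have "norm k \<le> 1" "d k \<le> 0" using k(1) by (auto simp: K_def)
      moreover have "norm k = 1 \<Longrightarrow> d k > 0" using assms(11) by (auto simp: d_def)
      ultimately show ?thesis by force
    qed
    show ?thesis
    proof (rule that[of "norm k"])
      fix z :: complex assume "z \<in> cball 0 1" "norm k < norm z"
      then show "d z > 0" using k(2)[of z] by (force simp: K_def)
    qed (use \<open>norm k < 1\<close> in auto)
  qed
  define r where "r = (1 + r0) / 2"
  have r: "r0 < r" "r < 1" using r0 by (auto simp: r_def)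
  define F where "F z = complex_of_real (ux z) - \<i> * complex_of_real (uy z)" for z
  define G where "G z = complex_of_real (vx z) - \<i> * complex_of_real (vy z)" for z
  define Fa where "Fa \<alpha> z = complex_of_real (cos \<alpha>) * F z + complex_of_real (sin \<alpha>) * G z" for \<alpha> z
  define ua where "ua \<alpha> = (\<lambda>z. cos \<alpha> * u z + sin \<alpha> * v z)" for \<alpha>
  define L where "L \<alpha> z = (LEAST n. (deriv ^^ n) (Fa \<alpha>) z \<noteq> 0)" for \<alpha> z
  define Z where "Z \<alpha> = {z\<in>ball 0 1. Fa \<alpha> z = 0}" for \<alpha>
  have hF: "F holomorphic_on ball 0 1"
    unfolding F_def by (rule holo_grad[OF open_ball _ assms(9)]) (use pu in auto)
  have hG: "G holomorphic_on ball 0 1"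
    unfolding G_def by (rule holo_grad[OF open_ball _ assms(10)]) (use pv in auto)
  have hFa: "Fa \<alpha> holomorphic_on ball 0 1" for \<alpha>
    unfolding Fa_def by (intro holomorphic_intros hF hG)
  have Fa0: "Fa 0 = F" by (auto simp: Fa_def fun_eq_iff)
  define c where "c \<alpha> = (if sin \<alpha> > 0 then \<i> else if sin \<alpha> < 0 then -\<i> else complex_of_real (cos \<alpha>))" for \<alpha>
  have pos: "Re (c \<alpha> * Fa \<alpha> z * cnj (Fa 0 z)) > 0" if "z \<in> cball 0 1" "r0 < norm z" for \<alpha> z
    using pos_lemma[OF r0d[OF that, unfolded d_def], of "cos \<alpha>" "sin \<alpha>"]
    by (simp add: Fa0 c_def Fa_def F_def G_def)
  have nz: "Fa \<alpha> z \<noteq> 0" if "z \<in> ball 0 1" "r0 < norm z" for \<alpha> z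
    using pos[of z \<alpha>] that by auto
  have ieq: "contour_integral (circlepath 0 r) (\<lambda>x. deriv (Fa \<alpha>) x * 1 / Fa \<alpha> x) =
             contour_integral (circlepath 0 r) (\<lambda>x. deriv (Fa 0) x * 1 / Fa 0 x)" for \<alpha>
  proof (rule integral_eq[where A = "ball 0 1 - cball 0 r0" and c = "c \<alpha>"])
    show "Fa \<alpha> holomorphic_on ball 0 1 - cball 0 r0" "Fa 0 holomorphic_on ball 0 1 - cball 0 r0"
      using hFa by (auto intro: holomorphic_on_subset)
    show "path_image (circlepath 0 r) \<subseteq> ball 0 1 - cball 0 r0" using r r0 by auto
    show "\<And>z. z \<in> ball 0 1 - cball 0 r0 \<Longrightarrow> 0 < Re (c \<alpha> * Fa \<alpha> z * cnj (Fa 0 z))"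
      using pos by auto
  qed auto
  have cnt: "contour_integral (circlepath 0 r) (\<lambda>x. deriv (Fa \<alpha>) x * 1 / Fa \<alpha> x) =
         2 * pi * \<i> * of_nat (\<Sum>z\<in>Z \<alpha>. L \<alpha> z)" for \<alpha>
    unfolding Z_def L_def by (rule count_integral[OF hFa r0(1) r nz])
  have sumeq: "(\<Sum>z\<in>Z \<alpha>. L \<alpha> z) = (\<Sum>z\<in>Z 0. L 0 z)" for \<alpha>
  proof -
    have "2 * pi * \<i> * of_nat (\<Sum>z\<in>Z \<alpha>. L \<alpha> z) = 2 * pi * \<i> * (of_nat (\<Sum>z\<in>Z 0. L 0 z) :: complex)"
      using cnt[of \<alpha>] cnt[of 0] ieq[of \<alpha>] by simp
    then show ?thesis by (simp only: mult_cancel_left of_nat_eq_iff) simp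
  qed
  have cms: "crit_mult_sum (ua \<alpha>) = enat (\<Sum>z\<in>Z \<alpha>. L \<alpha> z)" for \<alpha>
  proof -
    have pua: "has_partials (ua \<alpha>) (\<lambda>z. cos \<alpha> * ux z + sin \<alpha> * vx z) (\<lambda>z. cos \<alpha> * uy z + sin \<alpha> * vy z) z"
      if z: "z \<in> ball 0 1" for z
    proof -
      have "(ua \<alpha> has_derivative (\<lambda>h. cos \<alpha> * (ux z * Re h + uy z * Im h) + sin \<alpha> * (vx z * Re h + vy z * Im h))) (at z)"
        unfolding ua_def
        by (rule has_derivative_add[OF has_derivative_mult_right has_derivative_mult_right])
           (use pu pv z in \<open>auto simp: has_partials_def\<close>)
      moreover have "(\<lambda>h. cos \<alpha> * (ux z * Re h + uy z * Im h) + sin \<alpha> * (vx z * Re h + vy z * Im h)) =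
         (\<lambda>h. (cos \<alpha> * ux z + sin \<alpha> * vx z) * Re h + (cos \<alpha> * uy z + sin \<alpha> * vy z) * Im h)"
        by (auto simp: fun_eq_iff algebra_simps)
      ultimately show ?thesis by (simp add: has_partials_def)
    qed
    have cg: "cgrad (ua \<alpha>) z = Fa \<alpha> z" if z: "z \<in> ball 0 1" for z
      using cgrad_eq[OF pua[OF z]] by (simp add: Fa_def F_def G_def algebra_simps)
    have C: "{z \<in> ball 0 1. cgrad (ua \<alpha>) z = 0} = Z \<alpha>" using cg by (auto simp: Z_def)
    have fin: "finite (Z \<alpha>)" unfolding Z_def by (rule count_finite[OF hFa r0 nz])
    have w: "complex_of_real r \<in> ball 0 1" "Fa \<alpha> (complex_of_real r) \<noteq> 0"
      using r r0 nz[of "complex_of_real r" \<alpha>] by auto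
    have vo: "vanishing_order (cgrad (ua \<alpha>)) z = enat (L \<alpha> z)" if z: "z \<in> Z \<alpha>" for z
    proof -
      have zb: "z \<in> ball 0 1" using z by (auto simp: Z_def)
      have ev: "eventually (\<lambda>w. cgrad (ua \<alpha>) w = Fa \<alpha> w) (nhds z)"
        using eventually_nhds_in_open[OF open_ball zb] by (rule eventually_mono) (use cg in auto)
      have hd: "(deriv ^^ n) (cgrad (ua \<alpha>)) z = (deriv ^^ n) (Fa \<alpha>) z" for n
        by (rule higher_deriv_cong_ev[OF ev refl])
      show ?thesis
        using count_nonzero_deriv[OF hFa zb w] unfolding vanishing_order_def hd L_def by simp
    qed
    show ?thesis
    proof -
      have "(\<Sum>z\<in>Z \<alpha>. vanishing_order (cgrad (ua \<alpha>)) z) = (\<Sum>z\<in>Z \<alpha>. enat (L \<alpha> z))"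
        by (rule sum.cong[OF refl vo])
      also have "\<dots> = enat (\<Sum>z\<in>Z \<alpha>. L \<alpha> z)" by (rule sum_enat_eq[OF fin])
      finally show ?thesis unfolding crit_mult_sum_def Let_def C using fin by simp
    qed
  qed
  show ?thesis
  proof
    fix \<alpha> :: real assume "\<alpha> \<in> {0..2*pi}"
    show "crit_mult_sum (\<lambda>z. cos \<alpha> * u z + sin \<alpha> * v z) \<noteq> \<infinity> \<and>
          crit_mult_sum (\<lambda>z. cos \<alpha> * u z + sin \<alpha> * v z) = crit_mult_sum (\<lambda>z. cos 0 * u z + sin 0 * v z)"
      using cms[of \<alpha>] cms[of 0] sumeq[of \<alpha>] unfolding ua_def by simp
  qed
qed

end
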